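(* Let $G$ be a finite, simple, undirected graph of chromatic number $3$, and let $D$ be an orientation of $G$. Then there is a $3$-coloring $f$ of $G$ such that $D$ contains a directed full $f$-rainbow path, i.e. a directed path $v_1v_2v_3$ in $D$ (with arcs $(v_1,v_2)$ and $(v_2,v_3)$) whose three vertices receive three distinct colors under $f$.
   Context: A $3$-coloring of $G$ is a function $f:V(G)\to\{1,2,3\}$ with $f(u)\neq f(v)$ for every two adjacent vertices $u,v$. An orientation of $G$ is a digraph obtained by replacing each edge $uv$ by exactly one of the arcs $(u,v)$ or $(v,u)$. For a $k$-coloring $f$, a full $f$-rainbow path is a path of order $k$ whose vertices have pairwise distinct colors. *)

theory Defs
  imports Main
begin

definition simple_graph :: "'a set \<Rightarrow> ('a \<Rightarrow> 'a \<Rightarrow> bool) \<Rightarrow> bool" where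
  "simple_graph V E \<longleftrightarrow> finite V \<and> (\<forall>u v. E u v \<longrightarrow> u \<in> V \<and> v \<in> V)
     \<and> (\<forall>u v. E u v \<longrightarrow> E v u) \<and> (\<forall>v. \<not> E v v)"

definition proper_coloring :: "'a set \<Rightarrow> ('a \<Rightarrow> 'a \<Rightarrow> bool) \<Rightarrow> nat \<Rightarrow> ('a \<Rightarrow> nat) \<Rightarrow> bool" where
  "proper_coloring V E k f \<longleftrightarrow> (\<forall>v\<in>V. f v \<in> {1..k}) \<and> (\<forall>u v. E u v \<longrightarrow> f u \<noteq> f v)"

definition colorable :: "'a set \<Rightarrow> ('a \<Rightarrow> 'a \<Rightarrow> bool) \<Rightarrow> nat \<Rightarrow> bool" where
  "colorable V E k \<longleftrightarrow> (\<exists>f. proper_coloring V E k f)"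

definition chromatic_number :: "'a set \<Rightarrow> ('a \<Rightarrow> 'a \<Rightarrow> bool) \<Rightarrow> nat" where
  "chromatic_number V E = (LEAST k. colorable V E k)"

definition orientation :: "('a \<Rightarrow> 'a \<Rightarrow> bool) \<Rightarrow> ('a \<Rightarrow> 'a \<Rightarrow> bool) \<Rightarrow> bool" where
  "orientation E D \<longleftrightarrow> (\<forall>u v. D u v \<longrightarrow> E u v)
     \<and> (\<forall>u v. E u v \<longrightarrow> (D u v \<longleftrightarrow> \<not> D v u))"

definition has_full_rainbow_dipath3 :: "('a \<Rightarrow> 'a \<Rightarrow> bool) \<Rightarrow> ('a \<Rightarrow> nat) \<Rightarrow> bool" where
  "has_full_rainbow_dipath3 D f \<longleftrightarrow> (\<exists>v1 v2 v3. D v1 v2 \<and> D v2 v3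
     \<and> distinct [v1, v2, v3] \<and> distinct [f v1, f v2, f v3])"

end

theory Submission
  imports Defs
begin

lemma path3:
  assumes o: "orientation E D" and irr: "\<forall>v. \<not> E v v"
    and pr: "\<forall>u v. E u v \<longrightarrow> f u \<noteq> f v"
    and "D u v" "D v w" "f u \<noteq> f w"
  shows "has_full_rainbow_dipath3 D f"
proof -
  have e1: "E u v" "E v w" using assms o unfolding orientation_def by auto
  have "u \<noteq> w" using assms e1 o unfolding orientation_def by metis
  moreover have "u \<noteq> v" "v \<noteq> w" using e1 irr by auto
  moreover have "f u \<noteq> f v" "f v \<noteq> f w" using e1 pr by auto
  ultimately show ?thesis unfolding has_full_rainbow_dipath3_def using assms by auto
qed

lemma rainbow_at:
  assumes o: "orientation E D" and irr: "\<forall>v. \<not> E v v"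
    and pr: "\<forall>u v. E u v \<longrightarrow> f u \<noteq> f v"
    and x: "D x p" and y: "D p y" and a: "E p a" and b: "E p b" and ab: "f a \<noteq> f b"
  shows "has_full_rainbow_dipath3 D f"
proof -
  have da: "D p a \<or> D a p" using a o unfolding orientation_def by metis
  have db: "D p b \<or> D b p" using b o unfolding orientation_def by metis
  show ?thesis
  proof (cases "D a p")
    case True
    show ?thesis
    proof (cases "D p b")
      case True
      show ?thesis using path3[OF o irr pr \<open>D a p\<close> True ab] .
    next
      case False
      then have "D b p" using db by auto
      show ?thesis
      proof (cases "f y = f a")
        case True
        then have "f b \<noteq> f y" using ab by auto
        then show ?thesis using path3[OF o irr pr \<open>D b p\<close> y] by auto
      next
        case False
        then show ?thesis using path3[OF o irr pr \<open>D a p\<close> y] by auto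
      qed
    qed
  next
    case False
    then have "D p a" using da by auto
    show ?thesis
    proof (cases "D b p")
      case True
      then show ?thesis using path3[OF o irr pr True \<open>D p a\<close>] ab by auto
    next
      case False
      then have "D p b" using db by auto
      show ?thesis
      proof (cases "f x = f a")
        case True
        then have "f x \<noteq> f b" using ab by auto
        then show ?thesis using path3[OF o irr pr x \<open>D p b\<close>] by auto
      next
        case False
        then show ?thesis using path3[OF o irr pr x \<open>D p a\<close>] by auto
      qed
    qed
  qed
qed

theorem theorem4:
  fixes V :: "'a set" and E D :: "'a \<Rightarrow> 'a \<Rightarrow> bool"
  assumes "simple_graph V E"
    and "chromatic_number V E = 3"
    and "orientation E D"
  shows "\<exists>f. proper_coloring V E 3 f \<and> has_full_rainbow_dipath3 D f"
proof -
  note o = assms(3)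
  have fin: "finite V" and inV: "\<forall>u v. E u v \<longrightarrow> u \<in> V \<and> v \<in> V"
    and sym: "\<forall>u v. E u v \<longrightarrow> E v u" and irr: "\<forall>v. \<not> E v v"
    using assms(1) unfolding simple_graph_def by auto
  have DE: "\<And>u v. D u v \<Longrightarrow> E u v" using o unfolding orientation_def by auto
  have ED: "\<And>u v. E u v \<Longrightarrow> D u v \<or> D v u" using o unfolding orientation_def by metis
  have DD: "\<And>u v. D u v \<Longrightarrow> \<not> D v u" using o unfolding orientation_def by metis
  define P where "P = {v. (\<exists>u. D u v) \<and> (\<exists>w. D v w)}"
  have not2: "\<not> colorable V E 2"
  proof
    assume "colorable V E 2"
    then have "chromatic_number V E \<le> 2" unfolding chromatic_number_def by (rule Least_le)
    then show False using assms(2) by simp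
  qed
  have col3: "colorable V E 3"
  proof -
    obtain h where h: "bij_betw h V {0..<card V}" using ex_bij_betw_finite_nat[OF fin] by blast
    have "proper_coloring V E (card V) (\<lambda>v. Suc (h v))"
      unfolding proper_coloring_def
    proof (intro conjI allI impI ballI)
      fix v assume "v \<in> V" then show "Suc (h v) \<in> {1..card V}"
        using h unfolding bij_betw_def by (metis Suc_leI atLeastAtMost_iff atLeastLessThan_iff imageI le_add1 plus_1_eq_Suc)
    next
      fix u v assume "E u v"
      then have "u \<in> V" "v \<in> V" "u \<noteq> v" using inV irr by auto
      then show "Suc (h u) \<noteq> Suc (h v)" using h unfolding bij_betw_def inj_on_def by auto
    qed
    then have "\<exists>k. colorable V E k" unfolding colorable_def by blast
    then have "colorable V E (chromatic_number V E)" unfolding chromatic_number_def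
      by (rule LeastI_ex)
    then show ?thesis using assms(2) by simp
  qed
  show ?thesis
  proof (cases "\<exists>p q. p \<in> P \<and> q \<in> P \<and> E p q")
    case True
    then obtain p q where pq: "p \<in> P" "q \<in> P" "E p q" by blast
    obtain f where f: "proper_coloring V E 3 f" using col3 unfolding colorable_def by blast
    have pr: "\<forall>u v. E u v \<longrightarrow> f u \<noteq> f v" using f unfolding proper_coloring_def by auto
    have frange: "\<And>v. v \<in> V \<Longrightarrow> f v \<in> {1..3}" using f unfolding proper_coloring_def by auto
    have pV: "p \<in> V" "q \<in> V" using pq inV by auto
    obtain r where r: "(D p q \<and> D q r) \<or> (D r q \<and> D q p)" "r \<noteq> p" "E q r"
    proof (cases "D p q")
      case True
      obtain r where "D q r" using pq(2) unfolding P_def by blast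
      then show ?thesis using that True DD DE by blast
    next
      case False
      then have "D q p" using ED pq(3) by blast
      obtain r where "D r q" using pq(2) unfolding P_def by blast
      then show ?thesis using that \<open>D q p\<close> DD DE sym by blast
    qed
    have rV: "r \<in> V" using r inV by auto
    show ?thesis
    proof (cases "f p = f r")
      case False
      then have "has_full_rainbow_dipath3 D f"
        using r(1) path3[OF o irr pr] by (metis)
      then show ?thesis using f by blast
    next
      case fpr: True
      show ?thesis
      proof (cases "\<exists>a b. E p a \<and> E p b \<and> f a \<noteq> f b")
        case True
        then obtain a b where "E p a" "E p b" "f a \<noteq> f b" by blast
        moreover obtain x y where "D x p" "D p y" using pq(1) unfolding P_def by blast
        ultimately have "has_full_rainbow_dipath3 D f" using rainbow_at[OF o irr pr] by blast
        then show ?thesis using f by blast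
      next
        case False
        then have mono: "\<And>z. E p z \<Longrightarrow> f z = f q" using pq(3) by blast
        obtain c where c: "c \<in> {1..3}" "c \<noteq> f p" "c \<noteq> f q"
        proof -
          have "{1..3::nat} - {f p, f q} \<noteq> {}"
          proof -
            have "card ({1..3::nat} - {f p, f q}) \<ge> 1"
            proof -
              have "card {f p, f q} \<le> 2" by (simp add: card_insert_le_m1)
              moreover have "card ({1..3::nat} - {f p, f q}) \<ge> card {1..3::nat} - card {f p, f q}"
                by (rule diff_card_le_card_Diff) simp
              ultimately show ?thesis by simp
            qed
            then show ?thesis by (metis card.empty not_one_le_zero)
          qed
          then show ?thesis using that by blast
        qed
        define g where "g = f(p := c)"
        have gp: "proper_coloring V E 3 g"
          unfolding proper_coloring_def g_def
        proof (intro conjI allI impI ballI)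
          fix v assume "v \<in> V" then show "(f(p := c)) v \<in> {1..3}" using c frange by auto
        next
          fix u v assume e: "E u v"
          show "(f(p := c)) u \<noteq> (f(p := c)) v"
          proof (cases "u = p")
            case True
            then have "v \<noteq> p" using e irr by auto
            then show ?thesis using True mono e c by auto
          next
            case False
            show ?thesis
            proof (cases "v = p")
              case True
              then show ?thesis using False mono sym e c by auto
            next
              case False
              then show ?thesis using \<open>u \<noteq> p\<close> pr e by auto
            qed
          qed
        qed
        have prg: "\<forall>u v. E u v \<longrightarrow> g u \<noteq> g v" using gp unfolding proper_coloring_def by auto
        have "g p \<noteq> g r" using c fpr r(2) unfolding g_def by auto
        then have "has_full_rainbow_dipath3 D g"
          using r(1) path3[OF o irr prg] by metis
        then show ?thesis using gp by blast
      qed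
    qed
  next
    case False
    then have noPP: "\<And>p q. p \<in> P \<Longrightarrow> q \<in> P \<Longrightarrow> \<not> E p q" by blast
    define g where "g = (\<lambda>v. if \<not> (\<exists>u. D u v) then 1 else if \<not> (\<exists>w. D v w) then 2 else (3::nat))"
    have g3: "\<And>v. v \<in> P \<Longrightarrow> g v = 3" unfolding g_def P_def by auto
    have gD: "\<And>u v. D u v \<Longrightarrow> g u \<noteq> g v"
    proof -
      fix u v assume d: "D u v"
      have "g u \<noteq> 2" unfolding g_def using d by auto
      moreover have "g v \<noteq> 1" unfolding g_def using d by auto
      moreover have "\<not> (g u = 3 \<and> g v = 3)"
      proof
        assume "g u = 3 \<and> g v = 3"
        then have "u \<in> P" "v \<in> P" unfolding g_def P_def by (auto split: if_splits)
        then show False using noPP DE d by blast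
      qed
      moreover have "g u \<in> {1,2,3}" "g v \<in> {1,2,3}" unfolding g_def by auto
      ultimately show "g u \<noteq> g v" by auto
    qed
    have gp: "proper_coloring V E 3 g"
      unfolding proper_coloring_def
    proof (intro conjI allI impI ballI)
      fix v show "g v \<in> {1..3}" unfolding g_def by auto
    next
      fix u v assume "E u v" then show "g u \<noteq> g v" using ED gD by metis
    qed
    have "P \<noteq> {}"
    proof
      assume Pe: "P = {}"
      have "proper_coloring V E 2 g"
        unfolding proper_coloring_def
      proof (intro conjI allI impI ballI)
        fix v
        have "v \<notin> P" using Pe by auto
        then show "g v \<in> {1..2}" unfolding g_def P_def by auto
      next
        fix u v assume "E u v" then show "g u \<noteq> g v" using ED gD by metis
      qed
      then show False using not2 unfolding colorable_def by blast
    qed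
    then obtain p where p: "p \<in> P" by blast
    then obtain x y where xy: "D x p" "D p y" unfolding P_def by blast
    have "x \<notin> P" using noPP p xy DE by blast
    then have gx: "g x = 1" using xy unfolding g_def P_def by auto
    have "y \<notin> P" using noPP p xy DE by blast
    then have gy: "g y = 2" using xy unfolding g_def P_def by auto
    have prg: "\<forall>u v. E u v \<longrightarrow> g u \<noteq> g v" using gp unfolding proper_coloring_def by auto
    have "has_full_rainbow_dipath3 D g" using path3[OF o irr prg xy] gx gy by simp
    then show ?thesis using gp by blast
  qed
qed

end
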